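(* Let $k\ge 0$ be an integer and let $\sigma$ be a maximal simplex of $\mathrm{VR}(\mathbb{Z}^2;k)$. Then there is a point $c\in\mathbb{R}^2$, each of whose coordinates is an integer or a half-integer, such that $\sigma=B_{\mathbb{R}^2}[c,\tfrac{k}{2}]\cap\mathbb{Z}^2$.
   Context: $\mathbb{Z}^2$ and $\mathbb{R}^2$ carry the $l^1$ metric $d((x,y),(x',y'))=|x-x'|+|y-y'|$, and $B_{\mathbb{R}^2}[c,r]=\{p\in\mathbb{R}^2: d(p,c)\le r\}$. $\mathrm{VR}(X;r)$ is the simplicial complex on vertex set $X$ whose simplices are the finite nonempty subsets of diameter at most $r$; a maximal simplex is one not properly contained in another simplex. A half-integer is a number of the form $m+\tfrac12$ with $m\in\mathbb{Z}$. *)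

theory Defs
  imports "HOL-Analysis.Analysis"
begin

definition l1_int :: "int \<times> int \<Rightarrow> int \<times> int \<Rightarrow> int" where
  "l1_int p q = \<bar>fst p - fst q\<bar> + \<bar>snd p - snd q\<bar>"

definition l1_real :: "real \<times> real \<Rightarrow> real \<times> real \<Rightarrow> real" where
  "l1_real p q = \<bar>fst p - fst q\<bar> + \<bar>snd p - snd q\<bar>"

definition ball_R2 :: "real \<times> real \<Rightarrow> real \<Rightarrow> (real \<times> real) set" where
  "ball_R2 c r = {p. l1_real p c \<le> r}"

definition int_pt :: "int \<times> int \<Rightarrow> real \<times> real" where
  "int_pt p = (of_int (fst p), of_int (snd p))"

definition VR_simplex :: "real \<Rightarrow> (int \<times> int) set \<Rightarrow> bool" where
  "VR_simplex r S \<longleftrightarrow> finite S \<and> S \<noteq> {} \<and>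
     (\<forall>p\<in>S. \<forall>q\<in>S. real_of_int (l1_int p q) \<le> r)"

definition VR_maximal_simplex :: "real \<Rightarrow> (int \<times> int) set \<Rightarrow> bool" where
  "VR_maximal_simplex r S \<longleftrightarrow> VR_simplex r S \<and> (\<forall>T. VR_simplex r T \<longrightarrow> S \<subseteq> T \<longrightarrow> T = S)"

definition half_integer :: "real \<Rightarrow> bool" where
  "half_integer x \<longleftrightarrow> (\<exists>m::int. x = of_int m + 1/2)"

end

theory Submission
  imports Defs
begin

lemma half_lem: "real_of_int n / 2 \<in> \<int> \<or> half_integer (real_of_int n / 2)"
proof (cases "even n")
  case True
  then obtain m where "n = 2*m" by blast
  then show ?thesis by simp
next
  case False
  then obtain m where "n = 2*m+1" using oddE by blast
  then have "real_of_int n / 2 = of_int m + 1/2" by simp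
  then show ?thesis unfolding half_integer_def by blast
qed

lemma abs_max: "\<bar>x::int\<bar> + \<bar>y\<bar> = max \<bar>x+y\<bar> \<bar>x-y\<bar>"
  by (simp add: abs_if max_def)

lemma l1_uv: "l1_int p q \<le> K \<longleftrightarrow>
   \<bar>(fst p + snd p) - (fst q + snd q)\<bar> \<le> K \<and> \<bar>(fst p - snd p) - (fst q - snd q)\<bar> \<le> K"
proof -
  have "l1_int p q = max \<bar>(fst p + snd p) - (fst q + snd q)\<bar> \<bar>(fst p - snd p) - (fst q - snd q)\<bar>"
    unfolding l1_int_def abs_max by (simp add: algebra_simps)
  then show ?thesis by simp
qed

lemma abs2: "\<bar>a\<bar>+\<bar>b\<bar> \<le> (c::real) \<longleftrightarrow> (a+b \<le> c \<and> a-b \<le> c \<and> b-a \<le> c \<and> -a-b \<le> c)"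
  by (cases "a\<ge>0"; cases "b\<ge>0") auto
lemma r1: fixes x y A B K :: real
  assumes "A \<le> x+y" "x+y \<le> A+K" "B \<le> x-y" "x-y \<le> B+K"
  shows "\<bar>x - (A+B+K)/2\<bar> + \<bar>y - (A-B)/2\<bar> \<le> K/2"
  using assms unfolding abs2 by (simp add: field_simps)
lemma r2: fixes x y A B K :: real
  assumes "\<bar>x - (A+B+K)/2\<bar> + \<bar>y - (A-B)/2\<bar> \<le> K/2"
  shows "A \<le> x+y \<and> x+y \<le> A+K \<and> B \<le> x-y \<and> x-y \<le> B+K"
  using assms unfolding abs2 by (simp add: field_simps)

theorem lemma4p1:
  fixes k :: nat and \<sigma> :: "(int \<times> int) set"
  assumes "VR_maximal_simplex (real k) \<sigma>"
  shows "\<exists>c :: real \<times> real.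
           (fst c \<in> \<int> \<or> half_integer (fst c)) \<and>
           (snd c \<in> \<int> \<or> half_integer (snd c)) \<and>
           \<sigma> = {p. int_pt p \<in> ball_R2 c (real k / 2)}"
proof -
  have fin: "finite \<sigma>" and ne: "\<sigma> \<noteq> {}"
    and dia0: "\<And>p q. p \<in> \<sigma> \<Longrightarrow> q \<in> \<sigma> \<Longrightarrow> real_of_int (l1_int p q) \<le> real k"
    and mx: "\<And>T. VR_simplex (real k) T \<Longrightarrow> \<sigma> \<subseteq> T \<Longrightarrow> T = \<sigma>"
    using assms unfolding VR_maximal_simplex_def VR_simplex_def by auto
  have dia: "\<And>p q. p \<in> \<sigma> \<Longrightarrow> q \<in> \<sigma> \<Longrightarrow> l1_int p q \<le> int k"
    using dia0 by (metis of_int_le_iff of_int_of_nat_eq)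
  define a where "a = Min ((\<lambda>p. fst p + snd p) ` \<sigma>)"
  define b where "b = Min ((\<lambda>p. fst p - snd p) ` \<sigma>)"
  have "a \<in> (\<lambda>p. fst p + snd p) ` \<sigma>"
    using Min_in[of "(\<lambda>p. fst p + snd p) ` \<sigma>"] fin ne unfolding a_def by blast
  then obtain qa where qa: "qa \<in> \<sigma>" "a = fst qa + snd qa" by blast
  have "b \<in> (\<lambda>p. fst p - snd p) ` \<sigma>"
    using Min_in[of "(\<lambda>p. fst p - snd p) ` \<sigma>"] fin ne unfolding b_def by blast
  then obtain qb where qb: "qb \<in> \<sigma>" "b = fst qb - snd qb" by blast
  define T where "T = {p. a \<le> fst p + snd p \<and> fst p + snd p \<le> a + int k
      \<and> b \<le> fst p - snd p \<and> fst p - snd p \<le> b + int k}"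
  have sub: "\<sigma> \<subseteq> T"
  proof
    fix p assume p: "p \<in> \<sigma>"
    have "a \<le> fst p + snd p" unfolding a_def using fin p by auto
    moreover have "b \<le> fst p - snd p" unfolding b_def using fin p by auto
    moreover have "l1_int p qa \<le> int k" "l1_int p qb \<le> int k" using dia p qa qb by auto
    ultimately show "p \<in> T" unfolding T_def l1_uv using qa qb by auto
  qed
  have finT: "finite T"
  proof -
    define M where "M = \<bar>a\<bar> + \<bar>b\<bar> + int k"
    have "T \<subseteq> {-M..M} \<times> {-M..M}" unfolding T_def M_def by auto
    then show ?thesis by (rule finite_subset) auto
  qed
  have "VR_simplex (real k) T"
    unfolding VR_simplex_def
  proof (intro conjI ballI)
    show "finite T" by (rule finT)
    show "T \<noteq> {}" using sub ne by auto
  next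
    fix p q assume "p \<in> T" "q \<in> T"
    then have "l1_int p q \<le> int k" unfolding T_def l1_uv by auto
    then show "real_of_int (l1_int p q) \<le> real k" by linarith
  qed
  then have eq: "T = \<sigma>" using mx sub by blast
  define c where "c = (real_of_int (a + b + int k) / 2, real_of_int (a - b) / 2)"
  have "T = {p. int_pt p \<in> ball_R2 c (real k / 2)}"
  proof (intro set_eqI iffI)
    fix p assume "p \<in> T"
    then have "real_of_int a \<le> real_of_int (fst p + snd p) \<and> real_of_int (fst p + snd p) \<le> real_of_int (a + int k)
      \<and> real_of_int b \<le> real_of_int (fst p - snd p) \<and> real_of_int (fst p - snd p) \<le> real_of_int (b + int k)"
      unfolding T_def of_int_le_iff by blast
    then have "\<bar>real_of_int (fst p) - real_of_int (a + b + int k) / 2\<bar>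
       + \<bar>real_of_int (snd p) - real_of_int (a - b) / 2\<bar> \<le> real k / 2"
      using r1[of "real_of_int a" "real_of_int (fst p)" "real_of_int (snd p)" "real k" "real_of_int b"] by simp
    then show "p \<in> {p. int_pt p \<in> ball_R2 c (real k / 2)}"
      unfolding ball_R2_def int_pt_def l1_real_def c_def by simp
  next
    fix p assume "p \<in> {p. int_pt p \<in> ball_R2 c (real k / 2)}"
    then have h: "\<bar>real_of_int (fst p) - real_of_int (a + b + int k) / 2\<bar>
       + \<bar>real_of_int (snd p) - real_of_int (a - b) / 2\<bar> \<le> real k / 2"
      unfolding ball_R2_def int_pt_def l1_real_def c_def by simp
    have "real_of_int a \<le> real_of_int (fst p + snd p) \<and> real_of_int (fst p + snd p) \<le> real_of_int (a + int k)
      \<and> real_of_int b \<le> real_of_int (fst p - snd p) \<and> real_of_int (fst p - snd p) \<le> real_of_int (b + int k)"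
      using r2[of "real_of_int (fst p)" "real_of_int a" "real_of_int b" "real k" "real_of_int (snd p)"] h by simp
    then show "p \<in> T" unfolding T_def of_int_le_iff by blast
  qed
  moreover have "fst c \<in> \<int> \<or> half_integer (fst c)" unfolding c_def using half_lem[of "a + b + int k"] by (simp only: fst_conv)
  moreover have "snd c \<in> \<int> \<or> half_integer (snd c)" unfolding c_def using half_lem[of "a - b"] by (simp only: snd_conv)
  ultimately show ?thesis using eq by blast
qed

end
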